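(* Let $\Gamma$ be a simple $*$-path in $\Lambda$, let $t\in\mathbb{N}$ and $s\in\mathbb{N}$. For every $k\in\{0,\dots,|\mathrm{support}(\Gamma)|\}$ and every configuration $y$ in which exactly $k$ edges of $\Gamma$ are closed (with $P_\mu(Y_t=y)>0$), $$P_\mu\big(\Gamma\text{ closed in }Y_{t+s}\ \big|\ Y_t=y\big)\leqslant\left(\frac{s(1-p)}{|\Lambda|(1+p/q-p)}\right)^{|\mathrm{support}(\Gamma)|-k}.$$
   Context: Let $d\geqslant 2$, $\mathbb{L}^d=(\mathbb{Z}^d,\mathbb{E}^d)$ the nearest-neighbour lattice, and $q\geqslant 1$, $p\in[0,1]$. The box $\Lambda=(V,E)$ is the subgraph of $\mathbb{L}^d$ induced by the vertices in a $d$-dimensional cube centred at the origin (not necessarily axis-parallel); $|\Lambda|=|E|$. $\partial\Lambda=\{x\in V:\exists y\notin V,\ \langle x,y\rangle\in\mathbb{E}^d\}$. A hyperplane through the origin parallel to a face of the cube splits $\Lambda$ into $\Lambda^+,\Lambda^-$; $T=\partial\Lambda\cap\Lambda^+$, $B=\partial\Lambda\cap\Lambda^-$. For $\omega\in\{0,1\}^E$ (edges with $\omega(e)=1$ open), $\Phi^{TB}_{\Lambda,p,q}(\omega)\propto\prod_{e\in E}p^{\omega(e)}(1-p)^{1-\omega(e)}q^{k^{TB}(\omega)}$, where $k^{TB}(\omega)$ is the number of connected components of the graph obtained from $(V,\{\text{open edges}\})$ by adding two extra vertices, one joined to every vertex of $T$, the other to every vertex of $B$. $\{T\nleftrightarrow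 B\}$: no open path in $\Lambda$ joins $T$ to $B$. Coupled dynamics: $(E_t)_{t\in\mathbb{N}}$ i.i.d. uniform on $E$, $(U_t)_{t\in\mathbb{N}}$ i.i.d. uniform on $[0,1]$, independent. With $\Phi=\Phi^{TB}_{\Lambda,p,q}$, $\omega^e$ / $\omega_e$ the configuration with $e$ opened / closed, and $\theta(\omega,e)=\Phi(\omega_e)/(\Phi(\omega^e)+\Phi(\omega_e))$: at time $t$, with $e=E_t$, only $e$ is updated; $X_t(e)=1$ iff $U_t\geqslant\theta(X_{t-1},e)$; $Y_t(e)=1$ iff $U_t\geqslant\theta(Y_{t-1},e)$ and opening $e$ in $Y_{t-1}$ does not connect $T$ to $B$. On $\{(\omega_1,\omega_2):\omega_2\in\{T\nleftrightarrow B\},\ \omega_1\geqslant\omega_2\}$ this chain has a unique stationary distribution $\mu_{\Lambda,p,q}$; $P_\mu$ denotes the law of $(X_t,Y_t)_{t\in\mathbb{N}}$ started from $(X_0,Y_0)\sim\mu_{\Lambda,p,q}$. Two edges $e,f$ are $*$-neighbours if $\|m_e-m_f\|_\infty\leqslant 1$ ($m_e$ the midpoint of $e$); a $*$-path is a sequence of edges with consecutive ones $*$-neighbours; $\mathrm{support}(\Gamma)$ is its set of edges; it is simple if $|\mathrm{support}(\Gamma)|$ equals its length; "$\Gamma$ closed in $Y_{t+s}$" means all edges of $\Gamma$ are closed in $Y_{t+s}$. *)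

theory Defs
  imports "HOL-Probability.Probability"
begin

type_synonym 'd vtx = "int ^ 'd"
type_synonym 'd edge = "'d vtx set"
type_synonym 'd config = "'d edge \<Rightarrow> bool"   (* True = open *)

definition rv :: "'d::finite vtx \<Rightarrow> real ^ 'd" where
  "rv x = (\<chi> i. of_int (x $ i))"

definition lattice_edges :: "'d::finite edge set" where
  "lattice_edges = {{x, y} | x y. (\<Sum>i\<in>UNIV. \<bar>x $ i - y $ i\<bar>) = 1}"

definition orthonormal_frame :: "('d::finite \<Rightarrow> real ^ 'd) \<Rightarrow> bool" where
  "orthonormal_frame u \<longleftrightarrow> (\<forall>i j. u i \<bullet> u j = (if i = j then 1 else 0))"

definition box_vertices :: "('d::finite \<Rightarrow> real ^ 'd) \<Rightarrow> real \<Rightarrow> 'd vtx set" where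
  "box_vertices u r = {x. \<forall>i. \<bar>rv x \<bullet> u i\<bar> \<le> r}"

definition box_edges :: "'d::finite vtx set \<Rightarrow> 'd edge set" where
  "box_edges V = {e \<in> lattice_edges. e \<subseteq> V}"

definition boundary :: "'d::finite vtx set \<Rightarrow> 'd vtx set" where
  "boundary V = {x \<in> V. \<exists>y. y \<notin> V \<and> {x, y} \<in> lattice_edges}"

definition top_set :: "'d::finite vtx set \<Rightarrow> ('d \<Rightarrow> real ^ 'd) \<Rightarrow> 'd \<Rightarrow> 'd vtx set" where
  "top_set V u j = {x \<in> boundary V. rv x \<bullet> u j \<ge> 0}"

definition bot_set :: "'d::finite vtx set \<Rightarrow> ('d \<Rightarrow> real ^ 'd) \<Rightarrow> 'd \<Rightarrow> 'd vtx set" where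
  "bot_set V u j = {x \<in> boundary V. rv x \<bullet> u j < 0}"

definition configs :: "'d edge set \<Rightarrow> 'd config set" where
  "configs E = {w. \<forall>e. e \<notin> E \<longrightarrow> \<not> w e}"

definition open_adj :: "'d edge set \<Rightarrow> 'd config \<Rightarrow> ('d vtx \<times> 'd vtx) set" where
  "open_adj E w = {(x, y). {x, y} \<in> E \<and> w {x, y}}"

definition connects :: "'d edge set \<Rightarrow> 'd vtx set \<Rightarrow> 'd vtx set \<Rightarrow> 'd config \<Rightarrow> bool" where
  "connects E T B w \<longleftrightarrow> (\<exists>x\<in>T. \<exists>y\<in>B. (x, y) \<in> (open_adj E w)\<^sup>*)"

text \<open>Augmented graph: Inr True is the ghost vertex joined to T, Inr False the one joined to B.\<close>
definition aug_adj :: "'d edge set \<Rightarrow> 'd vtx set \<Rightarrow> 'd vtx set \<Rightarrow> 'd config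
    \<Rightarrow> ('d vtx + bool) rel" where
  "aug_adj E T B w =
     {(Inl x, Inl y) | x y. {x, y} \<in> E \<and> w {x, y}}
     \<union> {(Inl x, Inr True) | x. x \<in> T} \<union> {(Inr True, Inl x) | x. x \<in> T}
     \<union> {(Inl x, Inr False) | x. x \<in> B} \<union> {(Inr False, Inl x) | x. x \<in> B}"

definition kTB :: "'d vtx set \<Rightarrow> 'd edge set \<Rightarrow> 'd vtx set \<Rightarrow> 'd vtx set \<Rightarrow> 'd config \<Rightarrow> nat" where
  "kTB V E T B w = card ((Inl ` V \<union> {Inr True, Inr False}) // ((aug_adj E T B w)\<^sup>*))"

definition fk_weight :: "'d vtx set \<Rightarrow> 'd edge set \<Rightarrow> 'd vtx set \<Rightarrow> 'd vtx set
    \<Rightarrow> real \<Rightarrow> real \<Rightarrow> 'd config \<Rightarrow> real" where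
  "fk_weight V E T B p q w = (\<Prod>e\<in>E. if w e then p else 1 - p) * q ^ kTB V E T B w"

definition fk :: "'d vtx set \<Rightarrow> 'd edge set \<Rightarrow> 'd vtx set \<Rightarrow> 'd vtx set
    \<Rightarrow> real \<Rightarrow> real \<Rightarrow> 'd config \<Rightarrow> real" where
  "fk V E T B p q w =
     fk_weight V E T B p q w / (\<Sum>w'\<in>configs E. fk_weight V E T B p q w')"

definition theta :: "'d vtx set \<Rightarrow> 'd edge set \<Rightarrow> 'd vtx set \<Rightarrow> 'd vtx set
    \<Rightarrow> real \<Rightarrow> real \<Rightarrow> 'd config \<Rightarrow> 'd edge \<Rightarrow> real" where
  "theta V E T B p q w e =
     fk V E T B p q (w(e := False)) /
       (fk V E T B p q (w(e := True)) + fk V E T B p q (w(e := False)))"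

definition step :: "'d vtx set \<Rightarrow> 'd edge set \<Rightarrow> 'd vtx set \<Rightarrow> 'd vtx set
    \<Rightarrow> real \<Rightarrow> real \<Rightarrow> 'd config \<times> 'd config \<Rightarrow> 'd edge \<Rightarrow> real \<Rightarrow> 'd config \<times> 'd config" where
  "step V E T B p q xy e u =
     ((fst xy)(e := (u \<ge> theta V E T B p q (fst xy) e)),
      (snd xy)(e := (u \<ge> theta V E T B p q (snd xy) e
                      \<and> \<not> connects E T B ((snd xy)(e := True)))))"

type_synonym 'd sample = "('d config \<times> 'd config) \<times> (nat \<Rightarrow> 'd edge) \<times> (nat \<Rightarrow> real)"

text \<open>(X_t, Y_t) as a function of the initial state and the sequences (E_t), (U_t).\<close>
fun chain :: "'d vtx set \<Rightarrow> 'd edge set \<Rightarrow> 'd vtx set \<Rightarrow> 'd vtx set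
    \<Rightarrow> real \<Rightarrow> real \<Rightarrow> nat \<Rightarrow> 'd sample \<Rightarrow> 'd config \<times> 'd config" where
  "chain V E T B p q 0 w = fst w"
| "chain V E T B p q (Suc t) w =
     step V E T B p q (chain V E T B p q t w) (fst (snd w) (Suc t)) (snd (snd w) (Suc t))"

definition law :: "('d config \<times> 'd config) pmf \<Rightarrow> 'd edge set \<Rightarrow> 'd sample measure" where
  "law \<mu> E = measure_pmf \<mu> \<Otimes>\<^sub>M
     (PiM UNIV (\<lambda>_::nat. uniform_count_measure E) \<Otimes>\<^sub>M
      PiM UNIV (\<lambda>_::nat. uniform_measure lborel {0..1::real}))"

definition state_space :: "'d edge set \<Rightarrow> 'd vtx set \<Rightarrow> 'd vtx set \<Rightarrow> ('d config \<times> 'd config) set" where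
  "state_space E T B = {(w1, w2). w1 \<in> configs E \<and> w2 \<in> configs E
                          \<and> \<not> connects E T B w2 \<and> w2 \<le> w1}"

definition stationary :: "'d vtx set \<Rightarrow> 'd edge set \<Rightarrow> 'd vtx set \<Rightarrow> 'd vtx set
    \<Rightarrow> real \<Rightarrow> real \<Rightarrow> ('d config \<times> 'd config) pmf \<Rightarrow> bool" where
  "stationary V E T B p q \<mu> \<longleftrightarrow>
     set_pmf \<mu> \<subseteq> state_space E T B \<and>
     (\<forall>A. measure (law \<mu> E) {w \<in> space (law \<mu> E). chain V E T B p q 1 w \<in> A}
            = measure_pmf.prob \<mu> A)"

definition midpoint_e :: "'d::finite edge \<Rightarrow> real ^ 'd" where
  "midpoint_e e = (\<chi> i. (\<Sum>x\<in>e. of_int (x $ i)) / 2)"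

definition star_nb :: "'d::finite edge \<Rightarrow> 'd edge \<Rightarrow> bool" where
  "star_nb e f \<longleftrightarrow> (\<forall>i. \<bar>midpoint_e e $ i - midpoint_e f $ i\<bar> \<le> 1)"

definition star_path :: "'d::finite edge set \<Rightarrow> 'd edge list \<Rightarrow> bool" where
  "star_path E \<Gamma> \<longleftrightarrow> set \<Gamma> \<subseteq> E \<and>
     (\<forall>i. Suc i < length \<Gamma> \<longrightarrow> star_nb (\<Gamma> ! i) (\<Gamma> ! Suc i))"

end

theory Submission
  imports Defs
begin


lemma chain_dep:
  assumes "\<And>j. j \<le> n \<Longrightarrow> fst (snd w) j = fst (snd w') j \<and> snd (snd w) j = snd (snd w') j"
      and "fst w = fst w'"
  shows "chain V E T B p q n w = chain V E T B p q n w'"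
  using assms by (induction n) auto

lemma connects_mono:
  assumes "w \<le> w'" "connects E T B w" shows "connects E T B w'"
proof -
  have "open_adj E w \<subseteq> open_adj E w'" using assms(1) by (auto simp: open_adj_def le_fun_def)
  then have "(open_adj E w)\<^sup>* \<subseteq> (open_adj E w')\<^sup>*" by (rule rtrancl_mono)
  then show ?thesis using assms(2) unfolding connects_def by blast
qed

lemma chain_inv:
  assumes "\<not> connects E T B (snd (fst w))"
  shows "\<not> connects E T B (snd (chain V E T B p q n w))"
proof (induction n)
  case 0 then show ?case using assms by simp
next
  case (Suc n)
  define Y where "Y = snd (chain V E T B p q n w)"
  define e where "e = fst (snd w) (Suc n)"
  define u where "u = snd (snd w) (Suc n)"
  have eq: "snd (chain V E T B p q (Suc n) w) = Y(e := (u \<ge> theta V E T B p q Y e \<and> \<not> connects E T B (Y(e := True))))"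
    by (simp add: step_def Y_def e_def u_def)
  show ?case
  proof (cases "u \<ge> theta V E T B p q Y e \<and> \<not> connects E T B (Y(e := True))")
    case True
    have "snd (chain V E T B p q (Suc n) w) = Y(e := True)" using True eq by simp
    then show ?thesis using True by metis
  next
    case False
    have "Y(e := False) \<le> Y" by (auto simp: le_fun_def)
    moreover have "snd (chain V E T B p q (Suc n) w) = Y(e := False)" using False unfolding eq by (simp only: simp_thms)
    ultimately show ?thesis using Suc connects_mono[of "Y(e := False)" Y E T B] unfolding Y_def by metis
  qed
qed

lemma closing:
  assumes inv: "\<not> connects E T B (snd (fst w))"
  and "snd (chain V E T B p q t w) e" and "\<not> snd (chain V E T B p q (t+s) w) e"
  shows "\<exists>i<s. fst (snd w) (Suc (t+i)) = e \<and>
           snd (snd w) (Suc (t+i)) < theta V E T B p q (snd (chain V E T B p q (t+i) w)) e"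
  using assms(3)
proof (induction s)
  case 0 then show ?case using assms(2) by simp
next
  case (Suc s)
  show ?case
  proof (cases "snd (chain V E T B p q (t+s) w) e")
    case False
    then show ?thesis using Suc.IH by (meson less_SucI)
  next
    case True
    define Y where "Y = snd (chain V E T B p q (t+s) w)"
    define e' where "e' = fst (snd w) (Suc (t+s))"
    define u where "u = snd (snd w) (Suc (t+s))"
    have eq: "snd (chain V E T B p q (Suc (t+s)) w) = Y(e' := (u \<ge> theta V E T B p q Y e' \<and> \<not> connects E T B (Y(e' := True))))"
      by (simp add: step_def Y_def e'_def u_def)
    have nc: "\<not> connects E T B Y" using chain_inv[OF inv] Y_def by blast
    have Ye: "Y e" using True Y_def by simp
    have "e' = e" using Suc.prems eq Ye by (auto split: if_splits)
    moreover have "Y(e := True) = Y" using Ye by (simp add: fun_upd_idem)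
    ultimately have "u < theta V E T B p q Y e" using Suc.prems eq nc by auto
    then show ?thesis using \<open>e' = e\<close> e'_def u_def Y_def by (intro exI[of _ s]) auto
  qed
qed



lemma rtrancl_add_pair:
  assumes "(u, v) \<in> (R \<union> {(a, b), (b, a)})\<^sup>*"
  shows "(u, v) \<in> R\<^sup>* \<or> ((u, a) \<in> R\<^sup>* \<and> (b, v) \<in> R\<^sup>*) \<or> ((u, b) \<in> R\<^sup>* \<and> (a, v) \<in> R\<^sup>*)"
  using assms
proof (induction rule: rtrancl_induct)
  case base then show ?case by simp
next
  case (step v v')
  then consider "(v, v') \<in> R" | "v = a" "v' = b" | "v = b" "v' = a" by blast
  then show ?case
  proof cases
    case 1 then show ?thesis using step.IH by (meson rtrancl.rtrancl_into_rtrancl)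
  next
    case 2 then show ?thesis using step.IH by auto
  next
    case 3 then show ?thesis using step.IH by auto
  qed
qed

lemma quotient_card_add_pair:
  fixes R :: "'a rel"
  assumes fin: "finite S" and symR: "sym R"
  shows "card (S // R\<^sup>*) \<le> card (S // (R \<union> {(a, b), (b, a)})\<^sup>*) + 1"
proof -
  let ?r0 = "R\<^sup>*" and ?r1 = "(R \<union> {(a, b), (b, a)})\<^sup>*"
  have sym0: "sym ?r0" using symR by (rule sym_rtrancl)
  have sub: "?r0 \<subseteq> ?r1" by (rule rtrancl_mono) auto
  define f where "f X = ?r1 `` X" for X
  have fx: "f (?r0 `` {x}) = ?r1 `` {x}" for x
    unfolding f_def using sub by (auto intro: rtrancl_trans)
  define Ca where "Ca = ?r0 `` {a}"
  have img: "f ` (S // ?r0 - {Ca}) \<subseteq> S // ?r1"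
    by (auto simp: quotient_def fx)
  have inj: "inj_on f (S // ?r0 - {Ca})"
  proof (rule inj_onI)
    fix X X' assume X: "X \<in> S // ?r0 - {Ca}" and X': "X' \<in> S // ?r0 - {Ca}" and eq: "f X = f X'"
    obtain x where x: "x \<in> S" "X = ?r0 `` {x}" using X by (auto simp: quotient_def)
    obtain x' where x': "x' \<in> S" "X' = ?r0 `` {x'}" using X' by (auto simp: quotient_def)
    have "x' \<in> ?r1 `` {x'}" by simp
    then have "(x, x') \<in> ?r1" using eq x x' fx by auto
    then have c: "(x, x') \<in> ?r0 \<or> ((x, a) \<in> ?r0 \<and> (b, x') \<in> ?r0) \<or> ((x, b) \<in> ?r0 \<and> (a, x') \<in> ?r0)"
      by (rule rtrancl_add_pair)
    have cls: "(z, z') \<in> ?r0 \<Longrightarrow> ?r0 `` {z} = ?r0 `` {z'}" for z z'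
      using sym0 by (auto simp: sym_def intro: rtrancl_trans)
    show "X = X'"
    proof -
      consider "(x, x') \<in> ?r0" | "(x, a) \<in> ?r0" | "(a, x') \<in> ?r0" using c by blast
      then show ?thesis
      proof cases
        case 1 then show ?thesis using cls x x' by simp
      next
        case 2 then have "X = Ca" using cls x Ca_def by simp
        then show ?thesis using X by simp
      next
        case 3 then have "X' = Ca" using cls x' Ca_def by simp
        then show ?thesis using X' by simp
      qed
    qed
  qed
  have fin1: "finite (S // ?r1)" using fin by (auto simp: quotient_def)
  have fin0: "finite (S // ?r0)" using fin by (auto simp: quotient_def)
  have "card (S // ?r0) \<le> card (S // ?r0 - {Ca}) + 1"
    using fin0 by (metis card_Diff1_le card_Diff_singleton_if le_add_diff_inverse2 le_refl add_leE card.remove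
        linorder_not_le not_less_eq_eq Suc_eq_plus1 less_imp_le_nat)
  also have "card (S // ?r0 - {Ca}) = card (f ` (S // ?r0 - {Ca}))"
    using inj by (simp add: card_image)
  also have "\<dots> \<le> card (S // ?r1)" using img fin1 by (rule card_mono[rotated])
  finally show ?thesis by simp
qed



lemma aug_adj_sym: "sym (aug_adj E T B w)"
  unfolding aug_adj_def sym_def by (auto simp: insert_commute)

lemma aug_adj_upd:
  assumes "e \<in> E" "e = {x, y}"
  shows "aug_adj E T B (w(e := True)) = aug_adj E T B (w(e := False)) \<union> {(Inl x, Inl y), (Inl y, Inl x)}"
  using assms unfolding aug_adj_def by (auto simp: doubleton_eq_iff insert_commute)

lemma kTB_bound:
  assumes "finite V" "e \<in> E" "e = {x, y}"
  shows "kTB V E T B (w(e := False)) \<le> kTB V E T B (w(e := True)) + 1"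
  unfolding kTB_def aug_adj_upd[OF assms(2,3)]
  by (rule quotient_card_add_pair) (use assms(1) aug_adj_sym in auto)

lemma fk_weight_upd:
  assumes "finite E" "e \<in> E"
  shows "fk_weight V E T B p q (w(e := b)) =
     (if b then p else 1 - p) * (\<Prod>e'\<in>E - {e}. if w e' then p else 1 - p) * q ^ kTB V E T B (w(e := b))"
proof -
  have "(\<Prod>e'\<in>E. if (w(e := b)) e' then p else 1 - p) =
        (if b then p else 1 - p) * (\<Prod>e'\<in>E - {e}. if (w(e := b)) e' then p else 1 - p)"
    using assms by (simp add: prod.remove)
  also have "(\<Prod>e'\<in>E - {e}. if (w(e := b)) e' then p else 1 - p) = (\<Prod>e'\<in>E - {e}. if w e' then p else 1 - p)"
    by (rule prod.cong) auto
  finally show ?thesis unfolding fk_weight_def by simp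
qed

lemma theta_bound:
  fixes p q :: real
  assumes "finite V" "finite E" "e \<in> E" "e = {x, y}" "0 \<le> p" "p \<le> 1" "1 \<le> q"
  shows "theta V E T B p q w e \<le> q * (1 - p) / (q * (1 - p) + p)"
proof -
  define P where "P = (\<Prod>e'\<in>E - {e}. if w e' then p else 1 - p)"
  define k0 where "k0 = kTB V E T B (w(e := False))"
  define k1 where "k1 = kTB V E T B (w(e := True))"
  define Z where "Z = (\<Sum>w'\<in>configs E. fk_weight V E T B p q w')"
  define W0 where "W0 = (1 - p) * P * q ^ k0"
  define W1 where "W1 = p * P * q ^ k1"
  have P0: "P \<ge> 0" unfolding P_def using assms by (intro prod_nonneg) auto
  have kk: "k0 \<le> k1 + 1" unfolding k0_def k1_def by (rule kTB_bound[OF assms(1,3,4)])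
  have w0: "fk_weight V E T B p q (w(e := False)) = W0"
    using fk_weight_upd[OF assms(2,3), of V T B p q w False] by (simp add: W0_def P_def k0_def)
  have w1: "fk_weight V E T B p q (w(e := True)) = W1"
    using fk_weight_upd[OF assms(2,3), of V T B p q w True] by (simp add: W1_def P_def k1_def)
  have th: "theta V E T B p q w e = (W0 / Z) / (W1 / Z + W0 / Z)"
    unfolding theta_def fk_def w0 w1 Z_def by simp
  have W0ge: "W0 \<ge> 0" unfolding W0_def using P0 assms by simp
  have W1ge: "W1 \<ge> 0" unfolding W1_def using P0 assms by simp
  have D: "q * (1 - p) + p > 0"
  proof (cases "p = 1")
    case True then show ?thesis by simp
  next
    case False then show ?thesis using assms by (smt (verit) mult_pos_pos)
  qed
  have c0: "0 \<le> q * (1 - p) / (q * (1 - p) + p)" using D assms by simp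
  have main: "W0 / (W1 + W0) \<le> q * (1 - p) / (q * (1 - p) + p)"
  proof (cases "W1 + W0 = 0")
    case True then show ?thesis using c0 by simp
  next
    case False
    then have pos: "W1 + W0 > 0" using W0ge W1ge by simp
    have "q ^ k0 \<le> q ^ (k1 + 1)" using kk assms by (intro power_increasing) auto
    then have "(1 - p) * P * p * q ^ k0 \<le> (1 - p) * P * p * (q * q ^ k1)"
      using P0 assms by (intro mult_left_mono) auto
    then have "W0 * p \<le> q * (1 - p) * W1" unfolding W0_def W1_def by (simp add: algebra_simps)
    then have "W0 * (q * (1 - p) + p) \<le> q * (1 - p) * (W1 + W0)" by (simp add: algebra_simps)
    then show ?thesis using pos D by (simp add: divide_le_eq le_divide_eq mult.commute mult.left_commute)
  qed
  show ?thesis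
  proof (cases "Z = 0")
    case True then show ?thesis using th c0 by simp
  next
    case False
    then have "(W0 / Z) / (W1 / Z + W0 / Z) = W0 / (W1 + W0)" by (simp add: add_divide_distrib[symmetric])
    then show ?thesis using th main by metis
  qed
qed



lemma frame_span:
  fixes u :: "'d::finite \<Rightarrow> real ^ 'd"
  assumes "orthonormal_frame u"
  shows "inj u" "span (range u) = UNIV"
proof -
  have uu: "u i \<bullet> u j = (if i = j then 1 else 0)" for i j using assms by (simp add: orthonormal_frame_def)
  show inj: "inj u"
  proof (rule injI)
    fix i j assume "u i = u j"
    then have "u i \<bullet> u j = 1" using uu[of i i] by simp
    then show "i = j" using uu[of i j] by (auto split: if_splits)
  qed
  have po: "pairwise orthogonal (range u)"
    unfolding pairwise_def orthogonal_def using uu by auto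
  have nz: "0 \<notin> range u" using uu by (auto) (metis inner_zero_left zero_neq_one)
  have ind: "independent (range u)" by (rule pairwise_orthogonal_independent[OF po nz])
  have "card (range u) = CARD('d)" using inj by (simp add: card_image)
  then have "UNIV \<subseteq> span (range u)"
    by (intro card_ge_dim_independent[OF _ ind]) auto
  then show "span (range u) = UNIV" by auto
qed

lemma frame_norm_bound:
  fixes u :: "'d::finite \<Rightarrow> real ^ 'd"
  assumes "orthonormal_frame u" "\<And>i. \<bar>x \<bullet> u i\<bar> \<le> r"
  shows "x \<bullet> x \<le> real CARD('d) * r\<^sup>2"
proof -
  let ?U = "range u"
  have uu: "u i \<bullet> u j = (if i = j then 1 else 0)" for i j using assms by (simp add: orthonormal_frame_def)
  have vv: "v \<in> ?U \<Longrightarrow> w \<in> ?U \<Longrightarrow> v \<bullet> w = (if v = w then 1 else 0)" for v w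
    using uu by auto
  have "x \<in> span ?U" using frame_span[OF assms(1)] by simp
  then obtain c where x: "x = (\<Sum>v\<in>?U. c v *\<^sub>R v)"
    using span_finite[of ?U] by auto
  have cx: "c w = x \<bullet> w" if "w \<in> ?U" for w
  proof -
    have "x \<bullet> w = (\<Sum>v\<in>?U. c v * (v \<bullet> w))" unfolding x by (simp add: inner_sum_left)
    also have "\<dots> = (\<Sum>v\<in>?U. if v = w then c v else 0)" by (rule sum.cong) (use vv that in auto)
    also have "\<dots> = c w" using that by simp
    finally show ?thesis by simp
  qed
  have "x \<bullet> x = (\<Sum>v\<in>?U. c v * (v \<bullet> x))" by (subst (1) x) (simp add: inner_sum_left)
  also have "\<dots> = (\<Sum>v\<in>?U. (x \<bullet> v)\<^sup>2)" by (rule sum.cong) (auto simp: cx inner_commute power2_eq_square)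
  also have "\<dots> \<le> (\<Sum>v\<in>?U. r\<^sup>2)"
  proof (rule sum_mono)
    fix v assume "v \<in> ?U"
    then obtain i where "v = u i" by auto
    then have xr: "\<bar>x \<bullet> v\<bar> \<le> r" using assms(2) by simp
    show "(x \<bullet> v)\<^sup>2 \<le> r\<^sup>2" using power_mono[OF xr abs_ge_zero, of 2] by simp
  qed
  also have "\<dots> = real CARD('d) * r\<^sup>2" using frame_span(1)[OF assms(1)] by (simp add: card_image)
  finally show ?thesis .
qed

lemma finite_int_box:
  "finite {x :: int ^ 'd::finite. \<forall>k. \<bar>x $ k\<bar> \<le> M}"
proof -
  have "{x :: int ^ 'd. \<forall>k. \<bar>x $ k\<bar> \<le> M} \<subseteq> vec_nth -` (PiE UNIV (\<lambda>_. {-M..M}))"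
    by (auto simp: PiE_iff abs_le_iff) (metis minus_le_iff)
  moreover have "finite (vec_nth -` (PiE UNIV (\<lambda>_::'d. {-M..M})))"
    by (rule finite_vimageI) (auto intro: finite_PiE simp: inj_def vec_eq_iff)
  ultimately show ?thesis by (rule finite_subset)
qed

lemma box_finite:
  fixes u :: "'d::finite \<Rightarrow> real ^ 'd"
  assumes "orthonormal_frame u"
  shows "finite (box_vertices u r)"
proof -
  define M :: int where "M = \<lceil>real CARD('d) * r\<^sup>2\<rceil>"
  have "box_vertices u r \<subseteq> {x. \<forall>k. \<bar>x $ k\<bar> \<le> M}"
  proof safe
    fix x k assume "x \<in> box_vertices u r"
    then have "\<And>i. \<bar>rv x \<bullet> u i\<bar> \<le> r" by (simp add: box_vertices_def)
    then have b: "rv x \<bullet> rv x \<le> real CARD('d) * r\<^sup>2" by (rule frame_norm_bound[OF assms])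
    have "(rv x $ k)\<^sup>2 \<le> (\<Sum>i\<in>UNIV. (rv x $ i)\<^sup>2)"
      by (rule member_le_sum) auto
    also have "\<dots> = rv x \<bullet> rv x" by (simp add: inner_vec_def power2_eq_square)
    finally have "(rv x $ k)\<^sup>2 \<le> rv x \<bullet> rv x" .
    then have "real_of_int ((x $ k)\<^sup>2) \<le> real CARD('d) * r\<^sup>2" using b by (simp add: rv_def)
    then have "(x $ k)\<^sup>2 \<le> M" unfolding M_def by linarith
    moreover have "\<bar>x $ k\<bar> \<le> (x $ k)\<^sup>2"
    proof (cases "x $ k = 0")
      case False
      then have "1 \<le> \<bar>x $ k\<bar>" by simp
      then have "\<bar>x $ k\<bar> * 1 \<le> \<bar>x $ k\<bar> * \<bar>x $ k\<bar>" by (intro mult_left_mono) auto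
      then show ?thesis by (simp add: power2_eq_square abs_mult[symmetric])
    qed simp
    ultimately show "\<bar>x $ k\<bar> \<le> M" by simp
  qed
  then show ?thesis using finite_int_box finite_subset by blast
qed



lemma seq_comb_integral:
  fixes M :: "'a measure" and g :: "(nat \<Rightarrow> 'a) \<Rightarrow> ennreal"
  assumes PM: "prob_space M"
  assumes g: "g \<in> borel_measurable (PiM (UNIV::nat set) (\<lambda>_. M))"
  shows "(\<integral>\<^sup>+ a. g a \<partial>PiM UNIV (\<lambda>_. M)) =
         (\<integral>\<^sup>+ a. \<integral>\<^sup>+ a'. g (comb_seq n a a') \<partial>PiM UNIV (\<lambda>_. M) \<partial>PiM UNIV (\<lambda>_. M))"
proof -
  interpret M: prob_space M by fact
  interpret S: sequence_space M by unfold_locales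
  interpret SS: pair_sigma_finite S.S S.S by unfold_locales
  note g[measurable]
  have gm: "(\<lambda>z. g (comb_seq n (fst z) (snd z))) \<in> borel_measurable (S.S \<Otimes>\<^sub>M S.S)" by measurable
  have "(\<integral>\<^sup>+ a. g a \<partial>S.S) = (\<integral>\<^sup>+ a. g a \<partial>distr (S.S \<Otimes>\<^sub>M S.S) S.S (\<lambda>(\<omega>, \<omega>'). comb_seq n \<omega> \<omega>'))"
    by (simp add: S.PiM_comb_seq)
  also have "\<dots> = (\<integral>\<^sup>+ z. g (comb_seq n (fst z) (snd z)) \<partial>(S.S \<Otimes>\<^sub>M S.S))"
    by (subst nn_integral_distr) (auto simp: measurable_comb_seq g split_beta')
  also have "\<dots> = (\<integral>\<^sup>+ a. \<integral>\<^sup>+ a'. g (comb_seq n a a') \<partial>S.S \<partial>S.S)"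
    using S.nn_integral_fst[OF gm] by simp
  finally show ?thesis .
qed



lemma pair_comb_integral:
  fixes ME :: "'a measure" and MU :: "'b measure"
  assumes PME: "prob_space ME" and PMU: "prob_space MU"
  assumes f: "f \<in> borel_measurable (PiM (UNIV::nat set) (\<lambda>_. ME) \<Otimes>\<^sub>M PiM (UNIV::nat set) (\<lambda>_. MU))"
  shows "(\<integral>\<^sup>+ x. f x \<partial>(PiM UNIV (\<lambda>_. ME) \<Otimes>\<^sub>M PiM UNIV (\<lambda>_. MU))) =
         (\<integral>\<^sup>+ z. f (comb_seq n (fst (fst z)) (fst (snd z)), comb_seq n (snd (fst z)) (snd (snd z)))
            \<partial>((PiM UNIV (\<lambda>_. ME) \<Otimes>\<^sub>M PiM UNIV (\<lambda>_. MU)) \<Otimes>\<^sub>M (PiM UNIV (\<lambda>_. ME) \<Otimes>\<^sub>M PiM UNIV (\<lambda>_. MU))))"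
proof -
  interpret ME: prob_space ME by fact
  interpret MU: prob_space MU by fact
  interpret E: sequence_space ME by unfold_locales
  interpret U: sequence_space MU by unfold_locales
  let ?PE = "PiM (UNIV::nat set) (\<lambda>_. ME)"
  let ?PU = "PiM (UNIV::nat set) (\<lambda>_. MU)"
  let ?R = "?PE \<Otimes>\<^sub>M ?PU"
  interpret EU: pair_sigma_finite ?PE ?PU by unfold_locales
  interpret R: prob_space ?R by (rule prob_space_pair) unfold_locales
  interpret RR: pair_sigma_finite ?R ?R by unfold_locales
  note f[measurable]
  have "(\<integral>\<^sup>+ x. f x \<partial>?R) = (\<integral>\<^sup>+ a. \<integral>\<^sup>+ b. f (a, b) \<partial>?PU \<partial>?PE)"
    by (rule U.nn_integral_fst[symmetric]) measurable
  also have "\<dots> = (\<integral>\<^sup>+ a. \<integral>\<^sup>+ b. \<integral>\<^sup>+ b'. f (a, comb_seq n b b') \<partial>?PU \<partial>?PU \<partial>?PE)"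
  proof (rule nn_integral_cong)
    fix a assume a: "a \<in> space ?PE"
    show "(\<integral>\<^sup>+ b. f (a, b) \<partial>?PU) = (\<integral>\<^sup>+ b. \<integral>\<^sup>+ b'. f (a, comb_seq n b b') \<partial>?PU \<partial>?PU)"
      by (rule seq_comb_integral[OF PMU]) (use a in measurable)
  qed
  also have "\<dots> = (\<integral>\<^sup>+ a. \<integral>\<^sup>+ a'. \<integral>\<^sup>+ b. \<integral>\<^sup>+ b'. f (comb_seq n a a', comb_seq n b b') \<partial>?PU \<partial>?PU \<partial>?PE \<partial>?PE)"
    by (rule seq_comb_integral[OF PME]) measurable
  also have "\<dots> = (\<integral>\<^sup>+ a. \<integral>\<^sup>+ b. \<integral>\<^sup>+ a'. \<integral>\<^sup>+ b'. f (comb_seq n a a', comb_seq n b b') \<partial>?PU \<partial>?PE \<partial>?PU \<partial>?PE)"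
  proof (rule nn_integral_cong)
    fix a assume a: "a \<in> space ?PE"
    show "(\<integral>\<^sup>+ a'. \<integral>\<^sup>+ b. \<integral>\<^sup>+ b'. f (comb_seq n a a', comb_seq n b b') \<partial>?PU \<partial>?PU \<partial>?PE) =
          (\<integral>\<^sup>+ b. \<integral>\<^sup>+ a'. \<integral>\<^sup>+ b'. f (comb_seq n a a', comb_seq n b b') \<partial>?PU \<partial>?PE \<partial>?PU)"
      by (rule EU.Fubini'[symmetric]) (use a in measurable)
  qed
  also have "\<dots> = (\<integral>\<^sup>+ a. \<integral>\<^sup>+ b. \<integral>\<^sup>+ r'. f (comb_seq n a (fst r'), comb_seq n b (snd r')) \<partial>?R \<partial>?PU \<partial>?PE)"
  proof (intro nn_integral_cong)
    fix a b assume a: "a \<in> space ?PE" and b: "b \<in> space ?PU"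
    show "(\<integral>\<^sup>+ a'. \<integral>\<^sup>+ b'. f (comb_seq n a a', comb_seq n b b') \<partial>?PU \<partial>?PE) =
          (\<integral>\<^sup>+ r'. f (comb_seq n a (fst r'), comb_seq n b (snd r')) \<partial>?R)"
      using U.nn_integral_fst[of "\<lambda>r'. f (comb_seq n a (fst r'), comb_seq n b (snd r'))" ?PE]
      by (simp add: a b) (use a b in measurable)
  qed
  also have "\<dots> = (\<integral>\<^sup>+ r. \<integral>\<^sup>+ r'. f (comb_seq n (fst r) (fst r'), comb_seq n (snd r) (snd r')) \<partial>?R \<partial>?R)"
    using U.nn_integral_fst[of "\<lambda>r. \<integral>\<^sup>+ r'. f (comb_seq n (fst r) (fst r'), comb_seq n (snd r) (snd r')) \<partial>?R" ?PE]
    by simp measurable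
  also have "\<dots> = (\<integral>\<^sup>+ z. f (comb_seq n (fst (fst z)) (fst (snd z)), comb_seq n (snd (fst z)) (snd (snd z))) \<partial>(?R \<Otimes>\<^sub>M ?R))"
    using EU.P.nn_integral_fst[of "\<lambda>z. f (comb_seq n (fst (fst z)) (fst (snd z)), comb_seq n (snd (fst z)) (snd (snd z)))" ?R]
    by simp measurable
  finally show ?thesis .
qed



lemma pair_comb_emeasure:
  fixes ME :: "'a measure" and MU :: "'b measure"
  assumes PME: "prob_space ME" and PMU: "prob_space MU"
  assumes X: "X \<in> sets (PiM (UNIV::nat set) (\<lambda>_. ME) \<Otimes>\<^sub>M PiM (UNIV::nat set) (\<lambda>_. MU))"
  shows "emeasure (PiM UNIV (\<lambda>_. ME) \<Otimes>\<^sub>M PiM UNIV (\<lambda>_. MU)) X =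
         emeasure ((PiM UNIV (\<lambda>_. ME) \<Otimes>\<^sub>M PiM UNIV (\<lambda>_. MU)) \<Otimes>\<^sub>M (PiM UNIV (\<lambda>_. ME) \<Otimes>\<^sub>M PiM UNIV (\<lambda>_. MU)))
           {z \<in> space ((PiM UNIV (\<lambda>_. ME) \<Otimes>\<^sub>M PiM UNIV (\<lambda>_. MU)) \<Otimes>\<^sub>M (PiM UNIV (\<lambda>_. ME) \<Otimes>\<^sub>M PiM UNIV (\<lambda>_. MU))).
              (comb_seq n (fst (fst z)) (fst (snd z)), comb_seq n (snd (fst z)) (snd (snd z))) \<in> X}"
proof -
  let ?R = "PiM (UNIV::nat set) (\<lambda>_. ME) \<Otimes>\<^sub>M PiM (UNIV::nat set) (\<lambda>_. MU)"
  note X[measurable]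
  have "emeasure ?R X = (\<integral>\<^sup>+ x. indicator X x \<partial>?R)" using X by simp
  also have "\<dots> = (\<integral>\<^sup>+ z. indicator X (comb_seq n (fst (fst z)) (fst (snd z)), comb_seq n (snd (fst z)) (snd (snd z))) \<partial>(?R \<Otimes>\<^sub>M ?R))"
    by (rule pair_comb_integral[OF PME PMU]) measurable
  also have "\<dots> = (\<integral>\<^sup>+ z. indicator {z \<in> space (?R \<Otimes>\<^sub>M ?R). (comb_seq n (fst (fst z)) (fst (snd z)), comb_seq n (snd (fst z)) (snd (snd z))) \<in> X} z \<partial>(?R \<Otimes>\<^sub>M ?R))"
    by (rule nn_integral_cong) (auto simp: indicator_def)
  also have "\<dots> = emeasure (?R \<Otimes>\<^sub>M ?R) {z \<in> space (?R \<Otimes>\<^sub>M ?R). (comb_seq n (fst (fst z)) (fst (snd z)), comb_seq n (snd (fst z)) (snd (snd z))) \<in> X}"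
    by (rule nn_integral_indicator) measurable
  finally show ?thesis .
qed

lemma measurable_shift: "(\<lambda>\<omega> i. \<omega> (n + i)) \<in> PiM (UNIV::nat set) (\<lambda>_. N) \<rightarrow>\<^sub>M PiM (UNIV::nat set) (\<lambda>_. N)"
  by (rule measurable_PiM_single') (auto simp: space_PiM)

lemma measurable_shift'[measurable (raw)]:
  "f \<in> M \<rightarrow>\<^sub>M PiM (UNIV::nat set) (\<lambda>_. N) \<Longrightarrow> (\<lambda>x i. f x (n + i)) \<in> M \<rightarrow>\<^sub>M PiM (UNIV::nat set) (\<lambda>_. N)"
  using measurable_compose[OF _ measurable_shift, of f M N n] by (simp add: o_def)

lemma comb_seq_space[intro]:
  "a \<in> space (PiM (UNIV::nat set) (\<lambda>_. M)) \<Longrightarrow> a' \<in> space (PiM (UNIV::nat set) (\<lambda>_. M)) \<Longrightarrow>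
   comb_seq n a a' \<in> space (PiM (UNIV::nat set) (\<lambda>_. M))"
  by (auto simp: space_PiM PiE_iff comb_seq_def)

lemma split_indep:
  fixes M0 :: "'c measure" and ME :: "'a measure" and MU :: "'b measure"
  assumes P0: "prob_space M0" and PME: "prob_space ME" and PMU: "prob_space MU"
  assumes A: "A \<in> sets (M0 \<Otimes>\<^sub>M (PiM (UNIV::nat set) (\<lambda>_. ME) \<Otimes>\<^sub>M PiM (UNIV::nat set) (\<lambda>_. MU)))"
  assumes dep: "\<And>\<omega> a b a' b'. (\<omega>, (a, b)) \<in> space (M0 \<Otimes>\<^sub>M (PiM (UNIV::nat set) (\<lambda>_. ME) \<Otimes>\<^sub>M PiM (UNIV::nat set) (\<lambda>_. MU))) \<Longrightarrow>
      (\<omega>, (a', b')) \<in> space (M0 \<Otimes>\<^sub>M (PiM (UNIV::nat set) (\<lambda>_. ME) \<Otimes>\<^sub>M PiM (UNIV::nat set) (\<lambda>_. MU))) \<Longrightarrow>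
      (\<And>j. j < n \<Longrightarrow> a j = a' j \<and> b j = b' j) \<Longrightarrow> (\<omega>, (a, b)) \<in> A \<longleftrightarrow> (\<omega>, (a', b')) \<in> A"
  assumes K': "K' \<in> sets (PiM (UNIV::nat set) (\<lambda>_. ME) \<Otimes>\<^sub>M PiM (UNIV::nat set) (\<lambda>_. MU))"
  shows "emeasure (M0 \<Otimes>\<^sub>M (PiM UNIV (\<lambda>_. ME) \<Otimes>\<^sub>M PiM UNIV (\<lambda>_. MU)))
           (A \<inter> {w \<in> space (M0 \<Otimes>\<^sub>M (PiM UNIV (\<lambda>_. ME) \<Otimes>\<^sub>M PiM UNIV (\<lambda>_. MU))).
                   ((\<lambda>i. fst (snd w) (n + i)), (\<lambda>i. snd (snd w) (n + i))) \<in> K'})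
         = emeasure (M0 \<Otimes>\<^sub>M (PiM UNIV (\<lambda>_. ME) \<Otimes>\<^sub>M PiM UNIV (\<lambda>_. MU))) A *
           emeasure (PiM UNIV (\<lambda>_. ME) \<Otimes>\<^sub>M PiM UNIV (\<lambda>_. MU)) K'"
proof -
  interpret M0: prob_space M0 by fact
  interpret ME: prob_space ME by fact
  interpret MU: prob_space MU by fact
  interpret E: sequence_space ME by unfold_locales
  interpret U: sequence_space MU by unfold_locales
  let ?PE = "PiM (UNIV::nat set) (\<lambda>_. ME)"
  let ?PU = "PiM (UNIV::nat set) (\<lambda>_. MU)"
  let ?R = "?PE \<Otimes>\<^sub>M ?PU"
  interpret EU: pair_sigma_finite ?PE ?PU by unfold_locales
  interpret R: prob_space ?R by (rule prob_space_pair) unfold_locales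
  note A[measurable] K'[measurable]
  let ?K = "{w \<in> space (M0 \<Otimes>\<^sub>M ?R). ((\<lambda>i. fst (snd w) (n + i)), (\<lambda>i. snd (snd w) (n + i))) \<in> K'}"
  have Km: "?K \<in> sets (M0 \<Otimes>\<^sub>M ?R)" by measurable
  obtain z0 where z0: "z0 \<in> space ?R" using R.not_empty by blast
  have z01: "fst z0 \<in> space ?PE" and z02: "snd z0 \<in> space ?PU" using z0 by (auto simp: space_pair_measure)
  define L where "L \<omega> = {r \<in> space ?R. (\<omega>, (comb_seq n (fst r) (fst z0), comb_seq n (snd r) (snd z0))) \<in> A}" for \<omega>
  have Lm: "\<omega> \<in> space M0 \<Longrightarrow> L \<omega> \<in> sets ?R" for \<omega>
    unfolding L_def using z0 by measurable
  have depc: "(\<omega>, (comb_seq n a a', comb_seq n b b')) \<in> A \<longleftrightarrow> (\<omega>, (comb_seq n a a'', comb_seq n b b'')) \<in> A"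
    if "\<omega> \<in> space M0" "a \<in> space ?PE" "a' \<in> space ?PE" "a'' \<in> space ?PE"
       "b \<in> space ?PU" "b' \<in> space ?PU" "b'' \<in> space ?PU"
    for \<omega> a b a' b' a'' b''
    by (rule dep) (use that in \<open>auto simp: comb_seq_def space_pair_measure space_PiM PiE_iff\<close>)
  have shift: "(\<lambda>i. comb_seq n a a' (n + i)) = a'" for a a' :: "nat \<Rightarrow> 'x"
    by (simp add: comb_seq_def)
  have sec: "emeasure ?R (Pair \<omega> -` (A \<inter> ?K)) = emeasure ?R (L \<omega>) * emeasure ?R K'"
    and secA: "emeasure ?R (Pair \<omega> -` A) = emeasure ?R (L \<omega>)" if \<omega>: "\<omega> \<in> space M0" for \<omega>
  proof -
    have key: "(\<omega>, (comb_seq n (fst r) (fst r'), comb_seq n (snd r) (snd r'))) \<in> A \<longleftrightarrow> r \<in> L \<omega>"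
      and keysp: "(\<omega>, (comb_seq n (fst r) (fst r'), comb_seq n (snd r) (snd r'))) \<in> space (M0 \<Otimes>\<^sub>M ?R)"
      if r: "r \<in> space ?R" and r': "r' \<in> space ?R" for r r'
    proof -
      have r1: "fst r \<in> space ?PE" "snd r \<in> space ?PU" using r by (auto simp: space_pair_measure)
      have r1': "fst r' \<in> space ?PE" "snd r' \<in> space ?PU" using r' by (auto simp: space_pair_measure)
      show "(\<omega>, (comb_seq n (fst r) (fst r'), comb_seq n (snd r) (snd r'))) \<in> A \<longleftrightarrow> r \<in> L \<omega>"
        unfolding L_def using depc[OF \<omega> r1(1) r1'(1) z01 r1(2) r1'(2) z02] r by simp
      show "(\<omega>, (comb_seq n (fst r) (fst r'), comb_seq n (snd r) (snd r'))) \<in> space (M0 \<Otimes>\<^sub>M ?R)"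
        using \<omega> comb_seq_space[OF r1(1) r1'(1)] comb_seq_space[OF r1(2) r1'(2)] by (simp add: space_pair_measure)
    qed
    have shift2: "(\<lambda>i. comb_seq n (fst r) (fst r') (n + i), \<lambda>i. comb_seq n (snd r) (snd r') (n + i)) = r'" for r r' :: "(nat \<Rightarrow> 'a) \<times> (nat \<Rightarrow> 'b)"
      by (simp add: shift)
    have Lsub: "L \<omega> \<subseteq> space ?R" by (auto simp: L_def)
    have eq1: "{z \<in> space (?R \<Otimes>\<^sub>M ?R). (comb_seq n (fst (fst z)) (fst (snd z)), comb_seq n (snd (fst z)) (snd (snd z))) \<in> Pair \<omega> -` (A \<inter> ?K)}
        = L \<omega> \<times> K'"
    proof (rule set_eqI)
      fix z :: "((nat \<Rightarrow> 'a) \<times> (nat \<Rightarrow> 'b)) \<times> ((nat \<Rightarrow> 'a) \<times> (nat \<Rightarrow> 'b))"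
      obtain r r' where z: "z = (r, r')" by (cases z)
      show "z \<in> {z \<in> space (?R \<Otimes>\<^sub>M ?R). (comb_seq n (fst (fst z)) (fst (snd z)), comb_seq n (snd (fst z)) (snd (snd z))) \<in> Pair \<omega> -` (A \<inter> ?K)} \<longleftrightarrow> z \<in> L \<omega> \<times> K'"
      proof
        assume h: "z \<in> {z \<in> space (?R \<Otimes>\<^sub>M ?R). (comb_seq n (fst (fst z)) (fst (snd z)), comb_seq n (snd (fst z)) (snd (snd z))) \<in> Pair \<omega> -` (A \<inter> ?K)}"
        then have rs: "r \<in> space ?R" "r' \<in> space ?R" using z by (auto simp: space_pair_measure)
        have "(\<omega>, (comb_seq n (fst r) (fst r'), comb_seq n (snd r) (snd r'))) \<in> A"
             "(\<lambda>i. comb_seq n (fst r) (fst r') (n + i), \<lambda>i. comb_seq n (snd r) (snd r') (n + i)) \<in> K'"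
          using h z by auto
        then show "z \<in> L \<omega> \<times> K'" using key[OF rs] shift2[of r r'] z by simp
      next
        assume h: "z \<in> L \<omega> \<times> K'"
        then have rs: "r \<in> space ?R" "r' \<in> space ?R"
          using z Lsub sets.sets_into_space[OF K'] by auto
        have "(\<omega>, (comb_seq n (fst r) (fst r'), comb_seq n (snd r) (snd r'))) \<in> A" using h z key[OF rs] by simp
        moreover have "(\<lambda>i. comb_seq n (fst r) (fst r') (n + i), \<lambda>i. comb_seq n (snd r) (snd r') (n + i)) \<in> K'"
          using h z shift2[of r r'] by simp
        ultimately show "z \<in> {z \<in> space (?R \<Otimes>\<^sub>M ?R). (comb_seq n (fst (fst z)) (fst (snd z)), comb_seq n (snd (fst z)) (snd (snd z))) \<in> Pair \<omega> -` (A \<inter> ?K)}"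
          using z rs keysp[OF rs] by (simp add: space_pair_measure)
      qed
    qed
    have eq2: "{z \<in> space (?R \<Otimes>\<^sub>M ?R). (comb_seq n (fst (fst z)) (fst (snd z)), comb_seq n (snd (fst z)) (snd (snd z))) \<in> Pair \<omega> -` A}
        = L \<omega> \<times> space ?R"
    proof (rule set_eqI)
      fix z :: "((nat \<Rightarrow> 'a) \<times> (nat \<Rightarrow> 'b)) \<times> ((nat \<Rightarrow> 'a) \<times> (nat \<Rightarrow> 'b))"
      obtain r r' where z: "z = (r, r')" by (cases z)
      show "z \<in> {z \<in> space (?R \<Otimes>\<^sub>M ?R). (comb_seq n (fst (fst z)) (fst (snd z)), comb_seq n (snd (fst z)) (snd (snd z))) \<in> Pair \<omega> -` A} \<longleftrightarrow> z \<in> L \<omega> \<times> space ?R"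
      proof
        assume h: "z \<in> {z \<in> space (?R \<Otimes>\<^sub>M ?R). (comb_seq n (fst (fst z)) (fst (snd z)), comb_seq n (snd (fst z)) (snd (snd z))) \<in> Pair \<omega> -` A}"
        then have rs: "r \<in> space ?R" "r' \<in> space ?R" using z by (auto simp: space_pair_measure)
        have "(\<omega>, (comb_seq n (fst r) (fst r'), comb_seq n (snd r) (snd r'))) \<in> A"
          using h z by auto
        then show "z \<in> L \<omega> \<times> space ?R" using key[OF rs] z rs by simp
      next
        assume h: "z \<in> L \<omega> \<times> space ?R"
        then have rs: "r \<in> space ?R" "r' \<in> space ?R" using z Lsub by auto
        have "(\<omega>, (comb_seq n (fst r) (fst r'), comb_seq n (snd r) (snd r'))) \<in> A" using h z key[OF rs] by simp
        then show "z \<in> {z \<in> space (?R \<Otimes>\<^sub>M ?R). (comb_seq n (fst (fst z)) (fst (snd z)), comb_seq n (snd (fst z)) (snd (snd z))) \<in> Pair \<omega> -` A}"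
          using z rs by (simp add: space_pair_measure)
      qed
    qed
    have m1: "Pair \<omega> -` (A \<inter> ?K) \<in> sets ?R" using sets.Int[OF A Km] by (rule sets_Pair1)
    have m2: "Pair \<omega> -` A \<in> sets ?R" using A by (rule sets_Pair1)
    have "emeasure ?R (Pair \<omega> -` (A \<inter> ?K)) = emeasure (?R \<Otimes>\<^sub>M ?R) {z \<in> space (?R \<Otimes>\<^sub>M ?R). (comb_seq n (fst (fst z)) (fst (snd z)), comb_seq n (snd (fst z)) (snd (snd z))) \<in> Pair \<omega> -` (A \<inter> ?K)}"
      by (rule pair_comb_emeasure[OF PME PMU m1])
    also have "\<dots> = emeasure (?R \<Otimes>\<^sub>M ?R) (L \<omega> \<times> K')" by (simp only: eq1)
    also have "\<dots> = emeasure ?R (L \<omega>) * emeasure ?R K'"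
      by (rule EU.P.emeasure_pair_measure_Times) (use Lm \<omega> in auto)
    finally show "emeasure ?R (Pair \<omega> -` (A \<inter> ?K)) = emeasure ?R (L \<omega>) * emeasure ?R K'" .
    have "emeasure ?R (Pair \<omega> -` A) = emeasure (?R \<Otimes>\<^sub>M ?R) {z \<in> space (?R \<Otimes>\<^sub>M ?R). (comb_seq n (fst (fst z)) (fst (snd z)), comb_seq n (snd (fst z)) (snd (snd z))) \<in> Pair \<omega> -` A}"
      by (rule pair_comb_emeasure[OF PME PMU m2])
    also have "\<dots> = emeasure (?R \<Otimes>\<^sub>M ?R) (L \<omega> \<times> space ?R)" by (simp only: eq2)
    also have "\<dots> = emeasure ?R (L \<omega>)"
      by (subst EU.P.emeasure_pair_measure_Times) (use Lm \<omega> in \<open>auto simp: R.emeasure_space_1\<close>)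
    finally show "emeasure ?R (Pair \<omega> -` A) = emeasure ?R (L \<omega>)" .
  qed
  have "emeasure (M0 \<Otimes>\<^sub>M ?R) (A \<inter> ?K) = (\<integral>\<^sup>+ \<omega>. emeasure ?R (Pair \<omega> -` (A \<inter> ?K)) \<partial>M0)"
    by (rule EU.P.emeasure_pair_measure_alt) (use Km in auto)
  also have "\<dots> = (\<integral>\<^sup>+ \<omega>. emeasure ?R (Pair \<omega> -` A) * emeasure ?R K' \<partial>M0)"
  proof (rule nn_integral_cong)
    fix \<omega> assume \<omega>: "\<omega> \<in> space M0"
    show "emeasure ?R (Pair \<omega> -` (A \<inter> ?K)) = emeasure ?R (Pair \<omega> -` A) * emeasure ?R K'"
      by (simp only: sec[OF \<omega>] secA[OF \<omega>])
  qed
  also have "\<dots> = (\<integral>\<^sup>+ \<omega>. emeasure ?R (Pair \<omega> -` A) \<partial>M0) * emeasure ?R K'"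
    by (rule nn_integral_multc) (rule EU.P.measurable_emeasure_Pair[OF A])
  also have "(\<integral>\<^sup>+ \<omega>. emeasure ?R (Pair \<omega> -` A) \<partial>M0) = emeasure (M0 \<Otimes>\<^sub>M ?R) A"
    by (rule EU.P.emeasure_pair_measure_alt[symmetric]) (rule A)
  finally show ?thesis .
qed



lemma pred_ucm_eq[measurable (raw)]:
  assumes f: "f \<in> M \<rightarrow>\<^sub>M uniform_count_measure E"
  shows "Measurable.pred M (\<lambda>x. f x = e)"
proof -
  have "{x \<in> space M. f x = e} = f -` ({e} \<inter> E) \<inter> space M"
    using measurable_space[OF f] by (auto simp: space_uniform_count_measure)
  also have "\<dots> \<in> sets M" by (rule measurable_sets[OF f]) (auto simp: sets_uniform_count_measure)
  finally show ?thesis unfolding pred_def .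
qed

lemma K_bound:
  fixes E H :: "'a set" and c :: real
  assumes fin: "finite E" and ne: "E \<noteq> {}" and HE: "H \<subseteq> E" and c0: "0 \<le> c" and c1: "c \<le> 1"
  shows "emeasure (PiM (UNIV::nat set) (\<lambda>_. uniform_count_measure E) \<Otimes>\<^sub>M PiM (UNIV::nat set) (\<lambda>_. uniform_measure lborel {0..1::real}))
           {r \<in> space (PiM (UNIV::nat set) (\<lambda>_. uniform_count_measure E) \<Otimes>\<^sub>M PiM (UNIV::nat set) (\<lambda>_. uniform_measure lborel {0..1::real})).
              \<forall>e\<in>H. \<exists>i<s. fst r i = e \<and> snd r i < c}
         \<le> ennreal ((real s * (c / real (card E))) ^ card H)"
proof -
  let ?ME = "uniform_count_measure E"
  let ?MU = "uniform_measure lborel {0..1::real}"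
  let ?PE = "PiM (UNIV::nat set) (\<lambda>_. ?ME)"
  let ?PU = "PiM (UNIV::nat set) (\<lambda>_. ?MU)"
  let ?R = "?PE \<Otimes>\<^sub>M ?PU"
  let ?N = "real (card E)"
  have finH: "finite H" using fin HE finite_subset by blast
  interpret ME: prob_space ?ME by (rule prob_space_uniform_count_measure[OF fin ne])
  interpret MU: prob_space ?MU by (rule prob_space_uniform_measure) auto
  interpret E: sequence_space ?ME by unfold_locales
  interpret U: sequence_space ?MU by unfold_locales
  interpret EU: pair_sigma_finite ?PE ?PU by unfold_locales
  interpret R: prob_space ?R by (rule prob_space_pair) unfold_locales
  define T where "T = PiE H (\<lambda>_. {..<s})"
  define Rt where "Rt \<tau> = {r \<in> space ?R. \<forall>e\<in>H. fst r (\<tau> e) = e \<and> snd r (\<tau> e) < c}" for \<tau>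
  define b where "b = (c / ?N) ^ card H"
  have Rtm: "Rt \<tau> \<in> sets ?R" for \<tau>
    unfolding Rt_def using finH by measurable
  have finT: "finite T" unfolding T_def using finH by (simp add: finite_PiE)
  have cardT: "card T = s ^ card H" unfolding T_def using finH by (simp add: card_PiE)
  have sub: "{r \<in> space ?R. \<forall>e\<in>H. \<exists>i<s. fst r i = e \<and> snd r i < c} \<subseteq> (\<Union>\<tau>\<in>T. Rt \<tau>)"
  proof safe
    fix r assume r: "r \<in> space ?R" and h: "\<forall>e\<in>H. \<exists>i<s. fst r i = e \<and> snd r i < c"
    then obtain \<tau> where \<tau>: "\<forall>e\<in>H. \<tau> e < s \<and> fst r (\<tau> e) = e \<and> snd r (\<tau> e) < c" by metis
    then have "restrict \<tau> H \<in> T" by (auto simp: T_def)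
    moreover have "r \<in> Rt (restrict \<tau> H)" using r \<tau> by (auto simp: Rt_def)
    ultimately show "r \<in> (\<Union>\<tau>\<in>T. Rt \<tau>)" by blast
  qed
  have each: "emeasure ?R (Rt \<tau>) \<le> ennreal b" for \<tau>
  proof (cases "inj_on \<tau> H")
    case False
    then obtain e e' where ee: "e \<in> H" "e' \<in> H" "e \<noteq> e'" "\<tau> e = \<tau> e'" by (auto simp: inj_on_def)
    have "r \<notin> Rt \<tau>" for r
    proof
      assume "r \<in> Rt \<tau>"
      then have "fst r (\<tau> e) = e" "fst r (\<tau> e') = e'" using ee(1,2) unfolding Rt_def by blast+
      then show False using ee by metis
    qed
    then have "Rt \<tau> = {}" by blast
    then show ?thesis by simp
  next
    case True
    define X where "X = {a \<in> space ?PE. \<forall>e\<in>H. a (\<tau> e) = e}"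
    define Y where "Y = {a \<in> space ?PU. \<forall>e\<in>H. a (\<tau> e) < c}"
    have Xm: "X \<in> sets ?PE" unfolding X_def using finH by measurable
    have Ym: "Y \<in> sets ?PU" unfolding Y_def using finH by measurable
    have inv: "e \<in> H \<Longrightarrow> the_inv_into H \<tau> (\<tau> e) = e" for e using True by (rule the_inv_into_f_f)
    have X': "X = {a \<in> space ?PE. \<forall>j\<in>\<tau> ` H. a j \<in> {the_inv_into H \<tau> j}}"
      unfolding X_def using inv by auto
    have Y': "Y = {a \<in> space ?PU. \<forall>j\<in>\<tau> ` H. a j \<in> {..<c}}"
      unfolding Y_def by auto
    have "Rt \<tau> = X \<times> Y" unfolding Rt_def X_def Y_def by (auto simp: space_pair_measure)
    moreover have "emeasure ?PE X = ennreal ((1 / ?N) ^ card H)"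
    proof -
      have "emeasure ?PE X = (\<Prod>j\<in>\<tau> ` H. emeasure ?ME {the_inv_into H \<tau> j})"
        unfolding X' using finH
        by (intro E.emeasure_PiM_Collect) (auto simp: sets_uniform_count_measure inv intro!: HE[THEN subsetD])
      also have "\<dots> = (\<Prod>j\<in>\<tau> ` H. ennreal (1 / ?N))"
      proof (rule prod.cong)
        fix j assume "j \<in> \<tau> ` H"
        then have "the_inv_into H \<tau> j \<in> E" using inv HE by auto
        then show "emeasure ?ME {the_inv_into H \<tau> j} = ennreal (1 / ?N)"
          using fin by (simp add: ME.emeasure_eq_measure measure_uniform_count_measure)
      qed simp
      also have "\<dots> = ennreal ((1 / ?N) ^ card H)"
        using True by (simp add: prod_ennreal card_image ennreal_power)
      finally show ?thesis .
    qed
    moreover have "emeasure ?PU Y = ennreal (c ^ card H)"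
    proof -
      have "emeasure ?PU Y = (\<Prod>j\<in>\<tau> ` H. emeasure ?MU {..<c})"
        unfolding Y' using finH by (intro U.emeasure_PiM_Collect) auto
      also have "emeasure ?MU {..<c} = ennreal c"
      proof -
        have "{0..1::real} \<inter> {..<c} = {0..<c}" using c1 by auto
        then show ?thesis using c0 by (simp add: divide_ennreal_def)
      qed
      finally show ?thesis
        using True c0 by (simp add: prod_ennreal card_image ennreal_power)
    qed
    moreover have "emeasure ?R (X \<times> Y) = emeasure ?PE X * emeasure ?PU Y"
      by (rule U.emeasure_pair_measure_Times[OF Xm Ym])
    ultimately have "emeasure ?R (Rt \<tau>) = ennreal ((1 / ?N) ^ card H) * ennreal (c ^ card H)"
      by simp
    also have "\<dots> = ennreal b"
      unfolding b_def using c0 by (simp add: ennreal_mult[symmetric] power_mult_distrib[symmetric])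
    finally show ?thesis by simp
  qed
  have "emeasure ?R {r \<in> space ?R. \<forall>e\<in>H. \<exists>i<s. fst r i = e \<and> snd r i < c} \<le> emeasure ?R (\<Union>\<tau>\<in>T. Rt \<tau>)"
    by (rule emeasure_mono[OF sub]) (use finT Rtm in auto)
  also have "\<dots> \<le> (\<Sum>\<tau>\<in>T. emeasure ?R (Rt \<tau>))"
    by (rule emeasure_subadditive_finite) (use finT Rtm in auto)
  also have "\<dots> \<le> (\<Sum>\<tau>\<in>T. ennreal b)" by (rule sum_mono) (rule each)
  also have "\<dots> = ennreal (real (card T) * b)"
    using c0 by (simp add: b_def ennreal_of_nat_eq_real_of_nat ennreal_mult)
  also have "real (card T) * b = (real s * (c / ?N)) ^ card H"
    unfolding cardT b_def by (simp add: power_mult_distrib[symmetric])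
  finally show ?thesis .
qed



theorem lemma4p1:
  fixes u :: "'d::finite \<Rightarrow> real ^ 'd" and r p q :: real and j :: 'd
    and \<mu> :: "('d config \<times> 'd config) pmf" and \<Gamma> :: "'d edge list"
    and t s k :: nat and y :: "'d config"
    and V :: "'d vtx set" and E :: "'d edge set" and T B :: "'d vtx set"
  assumes "CARD('d) \<ge> 2"
    and "orthonormal_frame u" and "r > 0"
    and "q \<ge> 1" and "0 \<le> p" and "p \<le> 1"
    and V_def: "V = box_vertices u r"
    and E_def: "E = box_edges V"
    and T_def: "T = top_set V u j"
    and B_def: "B = bot_set V u j"
    and "E \<noteq> {}"
    and "stationary V E T B p q \<mu>"
    and "star_path E \<Gamma>" and "card (set \<Gamma>) = length \<Gamma>"
    and "k \<le> card (set \<Gamma>)"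
    and "card {e \<in> set \<Gamma>. \<not> y e} = k"
    and "measure (law \<mu> E) {w \<in> space (law \<mu> E). snd (chain V E T B p q t w) = y} > 0"
  shows "measure (law \<mu> E) {w \<in> space (law \<mu> E).
             (\<forall>e\<in>set \<Gamma>. \<not> snd (chain V E T B p q (t + s) w) e)
             \<and> snd (chain V E T B p q t w) = y}
         / measure (law \<mu> E) {w \<in> space (law \<mu> E). snd (chain V E T B p q t w) = y}
       \<le> (real s * (1 - p) / (real (card E) * (1 + p / q - p))) ^ (card (set \<Gamma>) - k)"
proof -
  note pos = assms(17)
  have finV: "finite V" using box_finite[OF assms(2)] V_def by simp
  have finE: "finite E"
  proof -
    have "E \<subseteq> Pow V" by (auto simp: E_def box_edges_def)
    then show ?thesis using finV by (meson finite_Pow_iff finite_subset)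
  qed
  have Eform: "\<exists>x y. e = {x, y}" if "e \<in> E" for e
    using that by (auto simp: E_def box_edges_def lattice_edges_def)
  define c where "c = q * (1 - p) / (q * (1 - p) + p)"
  have thc: "theta V E T B p q w e \<le> c" if eE: "e \<in> E" for w e
  proof -
    obtain x y where "e = {x, y}" using Eform[OF eE] by blast
    then show ?thesis unfolding c_def using theta_bound[OF finV finE eE _ assms(5,6,4)] by blast
  qed
  have D: "q * (1 - p) + p > 0"
  proof (cases "p = 1")
    case True then show ?thesis by simp
  next
    case False then show ?thesis using assms(4,5,6) by (smt (verit) mult_pos_pos)
  qed
  have c0: "0 \<le> c" unfolding c_def using D assms(4,5,6) by simp
  have c1: "c \<le> 1" unfolding c_def using D assms(4,5,6) by (simp add: divide_le_eq)
  have Npos: "card E > 0" using finE assms(11) by (simp add: card_gt_0_iff)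
  have base: "real s * (1 - p) / (real (card E) * (1 + p / q - p)) = real s * (c / real (card E))"
  proof -
    have q0: "q > 0" using assms(4) by simp
    have "1 + p / q - p = (q * (1 - p) + p) / q" using q0 by (simp add: field_simps)
    then show ?thesis unfolding c_def using q0 D by (simp add: field_simps)
  qed
  define G where "G = {e \<in> set \<Gamma>. y e}"
  have GE: "G \<subseteq> E" using assms(13) by (auto simp: G_def star_path_def)
  have cardG: "card G = card (set \<Gamma>) - k"
  proof -
    have "set \<Gamma> = G \<union> {e \<in> set \<Gamma>. \<not> y e}" "G \<inter> {e \<in> set \<Gamma>. \<not> y e} = {}" by (auto simp: G_def)
    then have "card (set \<Gamma>) = card G + card {e \<in> set \<Gamma>. \<not> y e}"
      by (metis (no_types, lifting) List.finite_set card_Un_disjoint finite_Un)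
    then show ?thesis using assms(16) by simp
  qed
  let ?M0 = "measure_pmf \<mu>"
  let ?ME = "uniform_count_measure E"
  let ?MU = "uniform_measure lborel {0..1::real}"
  let ?PE = "PiM (UNIV::nat set) (\<lambda>_. ?ME)"
  let ?PU = "PiM (UNIV::nat set) (\<lambda>_. ?MU)"
  let ?R = "?PE \<Otimes>\<^sub>M ?PU"
  let ?L = "law \<mu> E"
  have law_eq: "?L = ?M0 \<Otimes>\<^sub>M ?R" by (simp add: law_def)
  have PME: "prob_space ?ME" by (rule prob_space_uniform_count_measure[OF finE assms(11)])
  have PMU: "prob_space ?MU" by (rule prob_space_uniform_measure) auto
  have P0: "prob_space ?M0" by (rule prob_space_measure_pmf)
  interpret ME: prob_space ?ME by (rule PME)
  interpret MU: prob_space ?MU by (rule PMU)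
  interpret E: sequence_space ?ME by unfold_locales
  interpret U: sequence_space ?MU by unfold_locales
  interpret EU: pair_sigma_finite ?PE ?PU by unfold_locales
  interpret R: prob_space ?R by (rule prob_space_pair) unfold_locales
  interpret L: prob_space ?L unfolding law_eq by (rule prob_space_pair) unfold_locales
  define A where "A = {w \<in> space ?L. snd (chain V E T B p q t w) = y}"
  define Cl where "Cl = {w \<in> space ?L. (\<forall>e\<in>set \<Gamma>. \<not> snd (chain V E T B p q (t + s) w) e) \<and> snd (chain V E T B p q t w) = y}"
  define K' where "K' = {r \<in> space ?R. \<forall>e\<in>G. \<exists>i<s. fst r i = e \<and> snd r i < c}"
  define K where "K = {w \<in> space (?M0 \<Otimes>\<^sub>M ?R). ((\<lambda>i. fst (snd w) (Suc t + i)), (\<lambda>i. snd (snd w) (Suc t + i))) \<in> K'}"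
  define Nul where "Nul = {w \<in> space ?L. fst w \<notin> set_pmf \<mu>}"
  have Am: "A \<in> sets ?L" using pos measure_notin_sets[of A ?L] unfolding A_def by fastforce
  have finG: "finite G" using GE finE finite_subset by blast
  have K'm: "K' \<in> sets ?R" unfolding K'_def using finG by measurable
  have Km: "K \<in> sets ?L" unfolding K_def law_eq using K'm by measurable
  have Nul_eq: "Nul = (UNIV - set_pmf \<mu>) \<times> space ?R" by (auto simp: Nul_def law_eq space_pair_measure)
  have Nul_null: "Nul \<in> null_sets ?L"
  proof -
    have "emeasure ?M0 (UNIV - set_pmf \<mu>) = 0"
      by (simp add: measure_pmf.emeasure_eq_measure measure_pmf_zero_iff)
    then have "emeasure ?L Nul = 0"
      unfolding Nul_eq law_eq by (subst EU.P.emeasure_pair_measure_Times) auto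
    moreover have "Nul \<in> sets ?L" unfolding Nul_eq law_eq by auto
    ultimately show ?thesis by auto
  qed
  have RHS0: "0 \<le> (real s * (1 - p) / (real (card E) * (1 + p / q - p))) ^ (card (set \<Gamma>) - k)"
    unfolding base using c0 by simp
  have sub: "Cl \<subseteq> (A \<inter> K) \<union> Nul"
  proof
    fix w assume w: "w \<in> Cl"
    show "w \<in> (A \<inter> K) \<union> Nul"
    proof (cases "fst w \<in> set_pmf \<mu>")
      case False then show ?thesis using w by (auto simp: Cl_def Nul_def)
    next
      case True
      have "fst w \<in> state_space E T B" using True assms(12) by (auto simp: stationary_def)
      then have nc: "\<not> connects E T B (snd (fst w))" by (auto simp: state_space_def)
      have wsp: "w \<in> space ?L" and cl: "\<forall>e\<in>set \<Gamma>. \<not> snd (chain V E T B p q (t + s) w) e"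
        and yt: "snd (chain V E T B p q t w) = y" using w by (auto simp: Cl_def)
      have sp1: "fst (snd w) \<in> space ?PE" "snd (snd w) \<in> space ?PU"
        using wsp by (auto simp: law_eq space_pair_measure)
      have "\<forall>e\<in>G. \<exists>i<s. fst (snd w) (Suc t + i) = e \<and> snd (snd w) (Suc t + i) < c"
      proof
        fix e assume e: "e \<in> G"
        then have "snd (chain V E T B p q t w) e" "\<not> snd (chain V E T B p q (t + s) w) e"
          using yt cl by (auto simp: G_def)
        from closing[OF nc this] obtain i where i: "i < s" "fst (snd w) (Suc (t + i)) = e"
          "snd (snd w) (Suc (t + i)) < theta V E T B p q (snd (chain V E T B p q (t + i) w)) e" by blast
        have "theta V E T B p q (snd (chain V E T B p q (t + i) w)) e \<le> c" using e GE thc by blast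
        then show "\<exists>i<s. fst (snd w) (Suc t + i) = e \<and> snd (snd w) (Suc t + i) < c" using i by auto
      qed
      moreover have "((\<lambda>i. fst (snd w) (Suc t + i)), (\<lambda>i. snd (snd w) (Suc t + i))) \<in> space ?R"
        using sp1 by (auto simp: space_pair_measure space_PiM PiE_iff)
      ultimately have "w \<in> K" using wsp by (auto simp: K_def K'_def law_eq)
      moreover have "w \<in> A" using wsp yt by (simp add: A_def)
      ultimately show ?thesis by blast
    qed
  qed
  have split: "emeasure ?L (A \<inter> K) = emeasure ?L A * emeasure ?R K'"
  proof -
    have dep: "(\<omega>, (a, b)) \<in> A \<longleftrightarrow> (\<omega>, (a', b')) \<in> A"
      if "(\<omega>, (a, b)) \<in> space (?M0 \<Otimes>\<^sub>M ?R)" "(\<omega>, (a', b')) \<in> space (?M0 \<Otimes>\<^sub>M ?R)"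
         "\<And>j. j < Suc t \<Longrightarrow> a j = a' j \<and> b j = b' j" for \<omega> a b a' b'
    proof -
      have "chain V E T B p q t (\<omega>, (a, b)) = chain V E T B p q t (\<omega>, (a', b'))"
        by (rule chain_dep) (use that(3) in auto)
      then show ?thesis using that(1,2) by (simp add: A_def law_eq)
    qed
    have "emeasure (?M0 \<Otimes>\<^sub>M ?R) (A \<inter> K) = emeasure (?M0 \<Otimes>\<^sub>M ?R) A * emeasure ?R K'"
      unfolding K_def
      by (rule split_indep[OF P0 PME PMU _ dep K'm]) (use Am law_eq in auto)
    then show ?thesis by (simp add: law_eq)
  qed
  have mAK: "measure ?L (A \<inter> K) = measure ?L A * measure ?R K'"
    using split by (simp add: L.emeasure_eq_measure R.emeasure_eq_measure ennreal_mult[symmetric])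
  have mK': "measure ?R K' \<le> (real s * (c / real (card E))) ^ card G"
  proof -
    have "emeasure ?R K' \<le> ennreal ((real s * (c / real (card E))) ^ card G)"
      unfolding K'_def by (rule K_bound[OF finE assms(11) GE c0 c1])
    then show ?thesis using c0 by (simp add: R.emeasure_eq_measure)
  qed
  show ?thesis
  proof (cases "Cl \<in> sets ?L")
    case False
    then have "measure ?L Cl = 0" by (rule measure_notin_sets)
    then show ?thesis using RHS0 by (simp add: Cl_def)
  next
    case True
    have "measure ?L Cl \<le> measure ?L ((A \<inter> K) \<union> Nul)"
      by (rule L.finite_measure_mono[OF sub]) (use Am Km Nul_null in auto)
    also have "\<dots> = measure ?L (A \<inter> K)"
      by (rule measure_Un_null_set) (use Am Km Nul_null in auto)
    also have "\<dots> = measure ?L A * measure ?R K'" by (rule mAK)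
    finally have le: "measure ?L Cl \<le> measure ?L A * measure ?R K'" .
    have Apos: "measure ?L A > 0" using pos by (simp add: A_def)
    have "measure ?L Cl / measure ?L A \<le> measure ?R K'"
      using le Apos by (simp add: divide_le_eq mult.commute)
    also have "\<dots> \<le> (real s * (c / real (card E))) ^ card G" by (rule mK')
    finally show ?thesis unfolding base cardG by (simp add: Cl_def A_def)
  qed
qed

end
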